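(* Let $A$ be a complex semi-simple commutative Banach algebra and $\widetilde{\sigma}:A\to A$ an algebra automorphism. Then the commutant $A'$ of $A$ in $A\rtimes_{\widetilde{\sigma}}\mathbb{Z}$ is finitely generated as an algebra over $\mathbb{C}$ if and only if $A$ is finite-dimensional as a vector space over $\mathbb{C}$.
   Context: $A$ is semi-simple if the Gelfand transform $a\mapsto\widehat{a}$, $\widehat{a}(\mu)=\mu(a)$ for non-zero multiplicative linear functionals $\mu$, is injective. $A\rtimes_{\widetilde{\sigma}}\mathbb{Z}$ is the set of finitely supported functions $\mathbb{Z}\to A$, written $\sum_n a_n\delta^n$, with pointwise linear operations and multiplication determined by $(a_n\delta^n)*(b_m\delta^m)=a_n\widetilde{\sigma}^n(b_m)\delta^{n+m}$; $A$ is embedded as $\{a_0\delta^0\}$, and $A'=\{f : f*a=a*f \text{ for all } a\in A\}$. *)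

theory Defs
  imports Complex_Main
begin

text \<open>A complex commutative Banach algebra is modelled as a type of class
  real_normed_algebra, comm_ring, banach (a commutative real Banach algebra,
  not necessarily unital) together with a complex scalar multiplication
  that extends scaleR, makes it a complex vector space, is compatible with
  the product and satisfies norm homogeneity.\<close>

definition complex_scalar ::
  "(complex \<Rightarrow> 'a::{real_normed_algebra,comm_ring,banach} \<Rightarrow> 'a) \<Rightarrow> bool" where
  "complex_scalar smul \<longleftrightarrow>
     (\<forall>r x. smul (complex_of_real r) x = scaleR r x) \<and>
     (\<forall>c x y. smul c (x + y) = smul c x + smul c y) \<and>
     (\<forall>c d x. smul (c + d) x = smul c x + smul d x) \<and>
     (\<forall>c d x. smul (c * d) x = smul c (smul d x)) \<and>
     (\<forall>x. smul 1 x = x) \<and>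
     (\<forall>c x. norm (smul c x) = cmod c * norm x) \<and>
     (\<forall>c x y. smul c (x * y) = smul c x * y)"

definition character ::
  "(complex \<Rightarrow> 'a::{real_normed_algebra,comm_ring,banach} \<Rightarrow> 'a) \<Rightarrow> ('a \<Rightarrow> complex) \<Rightarrow> bool" where
  "character smul \<mu> \<longleftrightarrow>
     (\<forall>x y. \<mu> (x + y) = \<mu> x + \<mu> y) \<and>
     (\<forall>c x. \<mu> (smul c x) = c * \<mu> x) \<and>
     (\<forall>x y. \<mu> (x * y) = \<mu> x * \<mu> y) \<and>
     (\<exists>x. \<mu> x \<noteq> 0)"

text \<open>Semi-simplicity: the Gelfand transform a \<mapsto> (\<mu> \<mapsto> \<mu> a) is injective.\<close>
definition semisimple ::
  "(complex \<Rightarrow> 'a::{real_normed_algebra,comm_ring,banach} \<Rightarrow> 'a) \<Rightarrow> bool" where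
  "semisimple smul \<longleftrightarrow>
     (\<forall>a b. (\<forall>\<mu>. character smul \<mu> \<longrightarrow> \<mu> a = \<mu> b) \<longrightarrow> a = b)"

text \<open>Algebra automorphism (complex-linear, multiplicative, bijective; no continuity).\<close>
definition algebra_automorphism ::
  "(complex \<Rightarrow> 'a::{real_normed_algebra,comm_ring,banach} \<Rightarrow> 'a) \<Rightarrow> ('a \<Rightarrow> 'a) \<Rightarrow> bool" where
  "algebra_automorphism smul \<sigma> \<longleftrightarrow>
     bij \<sigma> \<and>
     (\<forall>x y. \<sigma> (x + y) = \<sigma> x + \<sigma> y) \<and>
     (\<forall>c x. \<sigma> (smul c x) = smul c (\<sigma> x)) \<and>
     (\<forall>x y. \<sigma> (x * y) = \<sigma> x * \<sigma> y)"

definition int_pow :: "('a \<Rightarrow> 'a) \<Rightarrow> int \<Rightarrow> 'a \<Rightarrow> 'a" where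
  "int_pow \<sigma> n = (if 0 \<le> n then \<sigma> ^^ nat n else (inv \<sigma>) ^^ nat (- n))"

text \<open>Crossed product: finitely supported functions int \<Rightarrow> A, f = \<Sum> f n \<delta>^n.\<close>
definition cp_carrier :: "(int \<Rightarrow> 'a::zero) set" where
  "cp_carrier = {f. finite {n. f n \<noteq> 0}}"

definition cp_mult ::
  "('a \<Rightarrow> 'a) \<Rightarrow> (int \<Rightarrow> 'a::{comm_ring}) \<Rightarrow> (int \<Rightarrow> 'a) \<Rightarrow> int \<Rightarrow> 'a" where
  "cp_mult \<sigma> f g = (\<lambda>k. \<Sum>n\<in>{n. f n \<noteq> 0}. f n * int_pow \<sigma> n (g (k - n)))"

definition cp_embed :: "'a::zero \<Rightarrow> int \<Rightarrow> 'a" where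
  "cp_embed a = (\<lambda>n. if n = 0 then a else 0)"

definition commutant :: "('a \<Rightarrow> 'a) \<Rightarrow> (int \<Rightarrow> 'a::comm_ring) set" where
  "commutant \<sigma> = {f \<in> cp_carrier.
      \<forall>a. cp_mult \<sigma> f (cp_embed a) = cp_mult \<sigma> (cp_embed a) f}"

inductive_set gen_subalg ::
  "(complex \<Rightarrow> 'a \<Rightarrow> 'a) \<Rightarrow> ('a \<Rightarrow> 'a) \<Rightarrow> (int \<Rightarrow> 'a::comm_ring) set \<Rightarrow> (int \<Rightarrow> 'a) set"
  for smul \<sigma> S where
  gen_base: "f \<in> S \<Longrightarrow> f \<in> gen_subalg smul \<sigma> S"
| gen_zero: "(\<lambda>n. 0) \<in> gen_subalg smul \<sigma> S"
| gen_add: "f \<in> gen_subalg smul \<sigma> S \<Longrightarrow> g \<in> gen_subalg smul \<sigma> S \<Longrightarrow>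
             (\<lambda>n. f n + g n) \<in> gen_subalg smul \<sigma> S"
| gen_smul: "f \<in> gen_subalg smul \<sigma> S \<Longrightarrow> (\<lambda>n. smul c (f n)) \<in> gen_subalg smul \<sigma> S"
| gen_mult: "f \<in> gen_subalg smul \<sigma> S \<Longrightarrow> g \<in> gen_subalg smul \<sigma> S \<Longrightarrow>
             cp_mult \<sigma> f g \<in> gen_subalg smul \<sigma> S"

definition finitely_generated_algebra ::
  "(complex \<Rightarrow> 'a \<Rightarrow> 'a) \<Rightarrow> ('a \<Rightarrow> 'a) \<Rightarrow> (int \<Rightarrow> 'a::comm_ring) set \<Rightarrow> bool" where
  "finitely_generated_algebra smul \<sigma> B \<longleftrightarrow>
     (\<exists>S. finite S \<and> S \<subseteq> B \<and> gen_subalg smul \<sigma> S = B)"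

definition finite_dim_complex :: "(complex \<Rightarrow> 'a \<Rightarrow> 'a::comm_ring) \<Rightarrow> bool" where
  "finite_dim_complex smul \<longleftrightarrow>
     (\<exists>B. finite B \<and> (\<forall>x. \<exists>c. x = (\<Sum>b\<in>B. smul (c b) b)))"

end

theory Submission
  imports Defs "HOL-Analysis.Analysis"
begin

definition ahom :: "(complex \<Rightarrow> 'a::{real_normed_algebra,comm_ring,banach} \<Rightarrow> 'a) \<Rightarrow> ('a \<Rightarrow> 'a) \<Rightarrow> bool" where
  "ahom smul h \<longleftrightarrow> (\<forall>x y. h (x + y) = h x + h y) \<and> (\<forall>c x. h (smul c x) = smul c (h x)) \<and>
     (\<forall>x y. h (x * y) = h x * h y)"

lemma ahom_id: "ahom smul id" and ahom_id': "ahom smul (\<lambda>x. x)"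
  by (auto simp: ahom_def)

lemma ahom_comp: "ahom smul f \<Longrightarrow> ahom smul g \<Longrightarrow> ahom smul (\<lambda>x. f (g x))"
  by (auto simp: ahom_def)

lemma ahom_add: "ahom smul f \<Longrightarrow> f (x + y) = f x + f y"
  and ahom_smul: "ahom smul f \<Longrightarrow> f (smul c x) = smul c (f x)"
  and ahom_mult: "ahom smul f \<Longrightarrow> f (x * y) = f x * f y"
  by (auto simp: ahom_def)

lemma ahom_zero: "ahom smul f \<Longrightarrow> f 0 = 0"
  by (metis add_cancel_right_right ahom_add)

lemma ahom_sum: "ahom smul f \<Longrightarrow> f (sum g A) = (\<Sum>a\<in>A. f (g a))"
  by (induction A rule: infinite_finite_induct) (auto simp: ahom_zero ahom_add)

locale csa =
  fixes smul :: "complex \<Rightarrow> 'a::{real_normed_algebra,comm_ring,banach} \<Rightarrow> 'a"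
  assumes cs: "complex_scalar smul"
begin

lemma smul_real: "smul (complex_of_real r) x = scaleR r x"
  and smul_add_right: "smul c (x + y) = smul c x + smul c y"
  and smul_add_left: "smul (c + d) x = smul c x + smul d x"
  and smul_mult: "smul (c * d) x = smul c (smul d x)"
  and smul_one: "smul 1 x = x"
  and smul_norm: "norm (smul c x) = cmod c * norm x"
  and smul_prod: "smul c (x * y) = smul c x * y"
  using cs unfolding complex_scalar_def by auto

sublocale V: vector_space smul
  by unfold_locales (auto simp: smul_add_right smul_add_left smul_mult smul_one)

lemma smul_prod2: "x * smul c y = smul c (x * y)"
  by (metis mult.commute smul_prod)

end

locale aut = csa +
  fixes \<sigma> :: "'a \<Rightarrow> 'a"
  assumes aut: "algebra_automorphism smul \<sigma>"
begin

lemma bij_\<sigma>: "bij \<sigma>" and ahom_\<sigma>: "ahom smul \<sigma>"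
  using aut unfolding algebra_automorphism_def ahom_def by auto

lemma \<sigma>_inv: "\<sigma> (inv \<sigma> x) = x" and inv_\<sigma>: "inv \<sigma> (\<sigma> x) = x"
  using bij_\<sigma> by (auto simp: bij_def surj_f_inv_f)

lemma ahom_inv: "ahom smul (inv \<sigma>)"
proof -
  have inj: "\<And>a b. \<sigma> a = \<sigma> b \<Longrightarrow> a = b" using bij_\<sigma> by (auto simp: bij_def inj_def)
  show ?thesis unfolding ahom_def
    by (intro conjI allI; rule inj)
       (simp_all add: \<sigma>_inv ahom_add[OF ahom_\<sigma>] ahom_smul[OF ahom_\<sigma>] ahom_mult[OF ahom_\<sigma>])
qed

abbreviation P where "P \<equiv> int_pow \<sigma>"

lemma P_succ: "P (n + 1) x = \<sigma> (P n x)"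
proof (cases "n \<ge> 0")
  case True
  then have "nat (n+1) = Suc (nat n)" by simp
  then show ?thesis using True by (simp add: int_pow_def)
next
  case False
  show ?thesis
  proof (cases "n + 1 = 0")
    case True
    then have "n = -1" by simp
    then show ?thesis by (simp add: int_pow_def \<sigma>_inv)
  next
    case False
    with \<open>\<not> n \<ge> 0\<close> have "nat (-n) = Suc (nat (-(n+1)))" by simp
    then show ?thesis using False \<open>\<not> n \<ge> 0\<close> by (simp add: int_pow_def \<sigma>_inv)
  qed
qed

lemma P_pred: "P (n - 1) x = inv \<sigma> (P n x)"
  using P_succ[of "n - 1" "P (n - 1) x"] P_succ[of "n-1"] by (metis diff_add_cancel inv_\<sigma>)

lemma P_0: "P 0 x = x" by (simp add: int_pow_def)

lemma ahom_P: "ahom smul (P n)"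
proof (induction n rule: int_induct[where k=0])
  case base then show ?case by (simp add: int_pow_def ahom_id')
next
  case (step1 i)
  have "P (i+1) = (\<lambda>x. \<sigma> (P i x))" using P_succ by auto
  then show ?case using ahom_comp[OF ahom_\<sigma> step1(2)] by simp
next
  case (step2 i)
  have "P (i-1) = (\<lambda>x. inv \<sigma> (P i x))" using P_pred by auto
  then show ?case using ahom_comp[OF ahom_inv step2(2)] by simp
qed

lemma P_add: "P (m + n) x = P m (P n x)"
proof (induction m rule: int_induct[where k=0])
  case base then show ?case by (simp add: P_0)
next
  case (step1 i)
  then show ?case by (metis P_succ add.commute add.left_commute)
next
  case (step2 i)
  then show ?case by (metis P_pred add.commute add_diff_eq)
qed

lemma P_inv: "P (-n) (P n x) = x" "P n (P (-n) x) = x"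
  using P_add[of "-n" n x] P_add[of n "-n" x] by (simp_all add: P_0)

lemma P_surj: "surj (P n)"
  by (metis P_inv(2) surjI)

end

context csa
begin

lemma bl_smul: "bounded_linear (\<lambda>k. smul k x)"
proof
  show "smul (b1 + b2) x = smul b1 x + smul b2 x" for b1 b2 by (rule smul_add_left)
  show "smul (r *\<^sub>R b) x = r *\<^sub>R smul b x" for r b
  proof -
    have "r *\<^sub>R b = complex_of_real r * b" by (rule scaleR_conv_of_real)
    then show ?thesis by (simp only: smul_mult smul_real)
  qed
  show "\<exists>K. \<forall>b. norm (smul b x) \<le> norm b * K"
    by (rule exI[of _ "norm x"]) (simp add: smul_norm)
qed

lemma closed_insert_span:
  assumes W: "closed W" "V.subspace W" and x: "x \<notin> W"
  shows "closed {y. \<exists>k. y - smul k x \<in> W}"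
  unfolding closed_sequential_limits
proof (intro allI impI, elim conjE)
  fix s l assume sY: "\<forall>n. s n \<in> {y. \<exists>k. y - smul k x \<in> W}" and sl: "s \<longlonglongrightarrow> l"
  have "\<forall>n. \<exists>k. s n - smul k x \<in> W" using sY by simp
  then obtain k where k: "\<And>n. s n - smul (k n) x \<in> W" by metis
  have W0: "0 \<in> W" using W V.subspace_0 by blast
  define d where "d = infdist x W"
  have d: "d > 0" unfolding d_def
    using in_closed_iff_infdist_zero[OF W(1)] W0 x infdist_nonneg[of x W]
    by (metis empty_iff less_eq_real_def)
  have bd: "cmod (k n) * d \<le> norm (s n)" for n
  proof (cases "k n = 0")
    case True then show ?thesis by simp
  next
    case False
    define z where "z = - smul (1 / k n) (s n - smul (k n) x)"
    have zW: "z \<in> W" unfolding z_def using W k V.subspace_neg V.subspace_scale by blast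
    have "smul (k n) (x - z) = s n"
      using False by (simp add: z_def V.scale_right_diff_distrib V.scale_right_distrib
         smul_mult[symmetric] field_simps)
    then have "norm (s n) = cmod (k n) * dist x z" by (metis smul_norm dist_norm)
    moreover have "d \<le> dist x z" unfolding d_def by (rule infdist_le[OF zW])
    ultimately show ?thesis by (simp add: mult_left_mono)
  qed
  from convergent_imp_bounded[OF sl] obtain B where B: "\<And>n. norm (s n) \<le> B"
    unfolding bounded_iff by auto
  have "bounded (range k)" unfolding bounded_iff
  proof (intro exI ballI)
    fix y assume "y \<in> range k" then obtain n where "y = k n" by auto
    have "cmod (k n) * d \<le> B" using bd[of n] B[of n] by linarith
    then show "norm y \<le> B / d" using d \<open>y = k n\<close> by (simp add: field_simps)
  qed
  then obtain c r where r: "strict_mono r" and kc: "(k \<circ> r) \<longlonglongrightarrow> c"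
    using bounded_imp_convergent_subsequence by blast
  have sr: "(s \<circ> r) \<longlonglongrightarrow> l" using LIMSEQ_subseq_LIMSEQ[OF sl r] .
  have "(\<lambda>n. smul ((k \<circ> r) n) x) \<longlonglongrightarrow> smul c x"
    using bounded_linear.tendsto[OF bl_smul kc] .
  then have lim: "(\<lambda>n. (s \<circ> r) n - smul ((k \<circ> r) n) x) \<longlonglongrightarrow> l - smul c x"
    using sr tendsto_diff by blast
  have allW: "\<forall>n. (s \<circ> r) n - smul ((k \<circ> r) n) x \<in> W" using k by simp
  have "l - smul c x \<in> W"
    by (rule closed_sequential_limits[THEN iffD1, OF W(1), rule_format, OF conjI[OF allW lim]])
  then show "l \<in> {y. \<exists>k. y - smul k x \<in> W}" by blast
qed

lemma closed_span_finite: "finite F \<Longrightarrow> closed (V.span F)"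
proof (induction F rule: finite_induct)
  case empty then show ?case by simp
next
  case (insert x F)
  show ?case
  proof (cases "x \<in> V.span F")
    case True then show ?thesis using insert by (simp add: V.span_redundant)
  next
    case False
    then show ?thesis using closed_insert_span[OF insert(3) V.subspace_span False]
      by (simp add: V.span_insert)
  qed
qed

lemma interior_subspace:
  assumes W: "V.subspace W" and i: "interior W \<noteq> {}"
  shows "W = UNIV"
proof -
  obtain x where "x \<in> interior W" using i by auto
  then obtain e where e: "e > 0" "ball x e \<subseteq> W" by (meson mem_interior)
  have xW: "x \<in> W" using e by (meson centre_in_ball subsetD)
  have "y \<in> W" for y
  proof (cases "y = 0")
    case True then show ?thesis using W V.subspace_0 by simp
  next
    case False
    define t where "t = e / (2 * norm y)"
    have t: "t > 0" using e False by (simp add: t_def)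
    have "norm (t *\<^sub>R y) = e / 2" using False e by (simp add: t_def)
    then have "x + t *\<^sub>R y \<in> ball x e" using e by (simp add: dist_norm)
    then have z: "x + t *\<^sub>R y \<in> W" using e by blast
    have "(x + t *\<^sub>R y) - x \<in> W" using V.subspace_diff[OF W z xW] .
    then have "t *\<^sub>R y \<in> W" by simp
    then have "smul (complex_of_real (1/t)) (smul (complex_of_real t) y) \<in> W"
      using V.subspace_scale[OF W] by (simp add: smul_real)
    moreover have "complex_of_real (1/t) * complex_of_real t = 1" using t by (simp flip: of_real_mult)
    moreover have "smul (complex_of_real (1/t)) (smul (complex_of_real t) y) = smul (complex_of_real (1/t) * complex_of_real t) y"
      by (rule smul_mult[symmetric])
    ultimately show ?thesis by (simp only: smul_one)
  qed
  then show ?thesis by auto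
qed

lemma span_finite_subset: "x \<in> V.span S \<Longrightarrow> \<exists>T. finite T \<and> T \<subseteq> S \<and> x \<in> V.span T"
proof -
  assume "x \<in> V.span S"
  then obtain t r where t: "finite t" "t \<subseteq> S" "x = (\<Sum>a\<in>t. smul (r a) a)"
    unfolding V.span_explicit[of S] by blast
  have "x \<in> V.span t" unfolding t(3)
    by (rule V.span_sum, rule V.span_scale, rule V.span_base)
  then show ?thesis using t by blast
qed

lemma countable_span_fd:
  assumes D: "countable D" and sp: "V.span D = UNIV"
  shows "finite_dim_complex smul"
proof (cases "D = {}")
  case True
  then have "\<forall>x::'a. x = 0" using sp by auto
  then show ?thesis unfolding finite_dim_complex_def by (metis finite.emptyI)
next
  case False
  define d where "d = from_nat_into D"
  have rd: "range d = D" using False D by (simp add: d_def)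
  define G where "G m = V.span (d ` {..<m})" for m
  have cl: "closed (G m)" for m unfolding G_def by (rule closed_span_finite) simp
  have un: "\<Union> (range G) = UNIV"
  proof (rule set_eqI, simp)
    fix x
    obtain T where T: "finite T" "T \<subseteq> D" "x \<in> V.span T" using span_finite_subset[of x D] sp by auto
    then obtain C where C: "finite C" "T = d ` C" using rd finite_subset_image[of T d UNIV] by auto
    then obtain m where "C \<subseteq> {..<m}" using finite_nat_bounded by blast
    then have "x \<in> G m" unfolding G_def using T C V.span_mono[of T "d ` {..<m}"] by blast
    then show "\<exists>m. x \<in> G m" by blast
  qed
  have "\<exists>m. interior (G m) \<noteq> {}"
  proof (rule ccontr)
    assume "\<not> ?thesis"
    then have "euclidean interior_of \<Union> (range G) = {}"
    proof (intro Baire_category_alt)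
      show "completely_metrizable_space (euclidean::'a topology) \<or> locally_compact_space (euclidean::'a topology) \<and> regular_space (euclidean::'a topology)"
        using completely_metrizable_space_euclidean by blast
      show "countable (range G)" by simp
      fix T assume "T \<in> range G"
      then obtain m where "T = G m" by blast
      then show "closedin euclidean T \<and> euclidean interior_of T = {}"
        using cl[of m] \<open>\<not> (\<exists>m. interior (G m) \<noteq> {})\<close> by (simp add: closed_closedin[symmetric])
    qed
    then show False using un by simp
  qed
  then obtain m where "interior (G m) \<noteq> {}" by blast
  then have "G m = UNIV" using interior_subspace[of "G m"] unfolding G_def by simp
  have fin: "finite (d ` {..<m})" by simp
  have "\<exists>c. x = (\<Sum>b\<in>d ` {..<m}. smul (c b) b)" for x
  proof -
    have "x \<in> G m" using \<open>G m = UNIV\<close> by simp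
    then show ?thesis unfolding G_def V.span_finite[OF fin] by auto
  qed
  then show ?thesis unfolding finite_dim_complex_def using fin by blast
qed

end

definition mon :: "int \<Rightarrow> 'a::zero \<Rightarrow> int \<Rightarrow> 'a" where
  "mon n a = (\<lambda>k. if k = n then a else 0)"

primrec dset :: "('a::comm_ring \<Rightarrow> 'a) \<Rightarrow> (int \<Rightarrow> 'a) set \<Rightarrow> nat \<Rightarrow> 'a set" where
  "dset \<sigma> S 0 = (\<lambda>p. fst p (snd p)) ` (S \<times> UNIV)"
| "dset \<sigma> S (Suc m) = dset \<sigma> S m \<union> (\<lambda>p. int_pow \<sigma> (fst p) (snd p)) ` (UNIV \<times> dset \<sigma> S m)
      \<union> (\<lambda>p. fst p * snd p) ` (dset \<sigma> S m \<times> dset \<sigma> S m)"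

lemma countable_dset: "finite S \<Longrightarrow> countable (dset \<sigma> S m)"
proof (induction m)
  case 0
  assume S: "finite S"
  have "countable (S \<times> (UNIV::int set))" using countable_finite[OF S] by simp
  then show ?case by simp
next
  case (Suc m)
  then have c: "countable (dset \<sigma> S m)" by simp
  have "countable ((UNIV::int set) \<times> dset \<sigma> S m)" using c by simp
  moreover have "countable (dset \<sigma> S m \<times> dset \<sigma> S m)" using c by simp
  ultimately show ?case using c by simp
qed

lemma dset_mono: "m \<le> m' \<Longrightarrow> dset \<sigma> S m \<subseteq> dset \<sigma> S m'"
  by (rule lift_Suc_mono_le[of "dset \<sigma> S"]) auto

context aut
begin

lemma cp_mult_sum:
  assumes "finite F" "{n. f n \<noteq> 0} \<subseteq> F"
  shows "cp_mult \<sigma> f g k = (\<Sum>n\<in>F. f n * P n (g (k - n)))"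
  unfolding cp_mult_def by (rule sum.mono_neutral_left) (use assms in auto)

lemma P_zero: "P n 0 = 0" by (rule ahom_zero[OF ahom_P])

lemma cp_mult_mon: "cp_mult \<sigma> (mon n a) (mon m b) = mon (n+m) (a * P n b)"
proof
  fix k
  have "cp_mult \<sigma> (mon n a) (mon m b) k = (\<Sum>i\<in>{n}. mon n a i * P i (mon m b (k - i)))"
    by (rule cp_mult_sum) (auto simp: mon_def)
  also have "\<dots> = mon (n+m) (a * P n b) k" by (auto simp: mon_def P_zero)
  finally show "cp_mult \<sigma> (mon n a) (mon m b) k = mon (n+m) (a * P n b) k" .
qed

lemma cp_mult_embed_right:
  assumes "f \<in> cp_carrier"
  shows "cp_mult \<sigma> f (cp_embed a) k = f k * P k a"
proof -
  have fin: "finite ({n. f n \<noteq> 0} \<union> {k})" using assms by (simp add: cp_carrier_def)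
  have "cp_mult \<sigma> f (cp_embed a) k = (\<Sum>n\<in>{n. f n \<noteq> 0} \<union> {k}. f n * P n (cp_embed a (k - n)))"
    by (rule cp_mult_sum[OF fin]) auto
  also have "\<dots> = (\<Sum>n\<in>{n. f n \<noteq> 0} \<union> {k}. if n = k then f k * P k a else 0)"
    by (rule sum.cong) (auto simp: cp_embed_def P_zero)
  also have "\<dots> = f k * P k a" using fin by simp
  finally show ?thesis .
qed

lemma cp_mult_embed_left: "cp_mult \<sigma> (cp_embed a) f k = a * f k"
proof -
  have "cp_mult \<sigma> (cp_embed a) f k = (\<Sum>n\<in>{0}. cp_embed a n * P n (f (k - n)))"
    by (rule cp_mult_sum) (auto simp: cp_embed_def)
  then show ?thesis by (simp add: cp_embed_def P_0)
qed

lemma commutant_iff: "f \<in> commutant \<sigma> \<longleftrightarrow> f \<in> cp_carrier \<and> (\<forall>n a. f n * P n a = a * f n)"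
  unfolding commutant_def
  by (auto simp: cp_mult_embed_right cp_mult_embed_left fun_eq_iff)

lemma embed_commutant: "cp_embed a \<in> commutant \<sigma>"
proof -
  have "{n. cp_embed a n \<noteq> 0} \<subseteq> {0}" by (auto simp: cp_embed_def)
  then have "cp_embed a \<in> cp_carrier" unfolding cp_carrier_def by (auto intro: finite_subset)
  then show ?thesis unfolding commutant_iff by (auto simp: cp_embed_def P_0 mult.commute)
qed

lemma span_mult_closed:
  assumes D: "\<And>x y. x \<in> D \<Longrightarrow> y \<in> D \<Longrightarrow> x * y \<in> D"
    and x: "x \<in> V.span D" and y: "y \<in> V.span D"
  shows "x * y \<in> V.span D"
proof -
  have 1: "u * v \<in> V.span D" if u: "u \<in> D" and v: "v \<in> V.span D" for u v
  proof -
    have "V.span D \<subseteq> {v. u * v \<in> V.span D}"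
    proof (rule V.span_minimal)
      show "D \<subseteq> {v. u * v \<in> V.span D}" using D u V.span_base by blast
      show "V.subspace {v. u * v \<in> V.span D}"
        by (rule V.subspaceI) (auto simp: distrib_left smul_prod2 V.span_zero V.span_add V.span_scale)
    qed
    then show ?thesis using v by blast
  qed
  have "V.span D \<subseteq> {u. u * y \<in> V.span D}"
  proof (rule V.span_minimal)
    show "D \<subseteq> {u. u * y \<in> V.span D}" using 1 y by blast
    show "V.subspace {u. u * y \<in> V.span D}"
      by (rule V.subspaceI) (auto simp: distrib_right smul_prod[symmetric] V.span_zero V.span_add V.span_scale)
  qed
  then show ?thesis using x by blast
qed

lemma span_P_closed:
  assumes D: "\<And>x. x \<in> D \<Longrightarrow> P n x \<in> D" and x: "x \<in> V.span D"
  shows "P n x \<in> V.span D"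
proof -
  have "V.span D \<subseteq> {x. P n x \<in> V.span D}"
  proof (rule V.span_minimal)
    show "D \<subseteq> {x. P n x \<in> V.span D}" using D V.span_base by blast
    show "V.subspace {x. P n x \<in> V.span D}"
      by (rule V.subspaceI) (auto simp: P_zero ahom_add[OF ahom_P] ahom_smul[OF ahom_P]
            V.span_zero V.span_add V.span_scale)
  qed
  then show ?thesis using x by blast
qed

lemma gen_values:
  assumes D: "\<And>x y. x \<in> D \<Longrightarrow> y \<in> D \<Longrightarrow> x * y \<in> D" "\<And>n x. x \<in> D \<Longrightarrow> P n x \<in> D"
    and S: "\<And>f k. f \<in> S \<Longrightarrow> f k \<in> D"
    and f: "f \<in> gen_subalg smul \<sigma> S"
  shows "f k \<in> V.span D"
  using f
proof (induction arbitrary: k rule: gen_subalg.induct)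
  case (gen_base f) then show ?case using S V.span_base by blast
next
  case gen_zero then show ?case by (simp add: V.span_zero)
next
  case (gen_add f g) then show ?case by (simp add: V.span_add)
next
  case (gen_smul f c) then show ?case by (simp add: V.span_scale)
next
  case (gen_mult f g)
  have "f n * P n (g (k - n)) \<in> V.span D" for n
    using span_mult_closed[OF D(1) gen_mult.IH(1) span_P_closed[OF D(2) gen_mult.IH(2)]] .
  then show ?case unfolding cp_mult_def by (intro V.span_sum)
qed

theorem dir1:
  assumes S: "finite S" and g: "gen_subalg smul \<sigma> S = commutant \<sigma>"
  shows "finite_dim_complex smul"
proof -
  define DD where "DD = (\<Union>m. dset \<sigma> S m)"
  have cDD: "countable DD" unfolding DD_def using countable_dset[OF S] by auto
  have m1: "x * y \<in> DD" if xy: "x \<in> DD" "y \<in> DD" for x y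
  proof -
    obtain i j where "x \<in> dset \<sigma> S i" "y \<in> dset \<sigma> S j" using xy unfolding DD_def by auto
    then have "x \<in> dset \<sigma> S (max i j)" "y \<in> dset \<sigma> S (max i j)"
      using dset_mono[of i "max i j" \<sigma> S] dset_mono[of j "max i j" \<sigma> S] by auto
    then have "x * y \<in> dset \<sigma> S (Suc (max i j))" by force
    then show ?thesis unfolding DD_def by blast
  qed
  have m2: "P n x \<in> DD" if xD: "x \<in> DD" for n x
  proof -
    obtain i where "x \<in> dset \<sigma> S i" using xD unfolding DD_def by auto
    then have "P n x \<in> dset \<sigma> S (Suc i)" by force
    then show ?thesis unfolding DD_def by blast
  qed
  have m3: "f k \<in> DD" if "f \<in> S" for f k
  proof -
    have "f k \<in> dset \<sigma> S 0" using that by force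
    then show ?thesis unfolding DD_def by blast
  qed
  have "a \<in> V.span DD" for a
  proof -
    have "cp_embed a \<in> gen_subalg smul \<sigma> S" using g embed_commutant by simp
    then have "cp_embed a 0 \<in> V.span DD"
      using gen_values[where D=DD and S=S and f="cp_embed a" and k=0] m1 m2 m3 by blast
    then show ?thesis by (simp add: cp_embed_def)
  qed
  then have "V.span DD = UNIV" by auto
  then show ?thesis by (rule countable_span_fd[OF cDD])
qed

end

context csa
begin

lemma chr_add: "character smul \<mu> \<Longrightarrow> \<mu> (x + y) = \<mu> x + \<mu> y"
  and chr_smul: "character smul \<mu> \<Longrightarrow> \<mu> (smul c x) = c * \<mu> x"
  and chr_mult: "character smul \<mu> \<Longrightarrow> \<mu> (x * y) = \<mu> x * \<mu> y"
  and chr_nz: "character smul \<mu> \<Longrightarrow> \<exists>x. \<mu> x \<noteq> 0"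
  by (auto simp: character_def)

lemma chr_zero: "character smul \<mu> \<Longrightarrow> \<mu> 0 = 0"
  by (metis add_0 add_cancel_right_right chr_add)

lemma chr_diff: "character smul \<mu> \<Longrightarrow> \<mu> (x - y) = \<mu> x - \<mu> y"
  by (metis add_diff_cancel chr_add diff_add_cancel eq_diff_eq)

lemma chr_span: assumes "character smul \<mu>" "\<And>t. t \<in> T \<Longrightarrow> \<mu> t = 0" "x \<in> V.span T"
  shows "\<mu> x = 0"
proof -
  have "V.span T \<subseteq> {x. \<mu> x = 0}"
    by (rule V.span_minimal) (use assms in \<open>auto intro!: V.subspaceI simp: chr_zero chr_add chr_smul\<close>)
  then show ?thesis using assms by blast
qed

lemma sep_elem:
  assumes m: "character smul \<mu>" and n: "character smul \<nu>" and ne: "\<mu> \<noteq> \<nu>"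
  shows "\<exists>w. \<mu> w \<noteq> 0 \<and> \<nu> w = 0"
proof -
  obtain x where x: "\<mu> x \<noteq> \<nu> x" using ne by auto
  obtain y where y: "\<mu> y \<noteq> 0" using chr_nz[OF m] by auto
  define w where "w = y * x - smul (\<nu> x) y"
  have "\<mu> w = \<mu> y * (\<mu> x - \<nu> x)"
    unfolding w_def by (simp add: chr_diff[OF m] chr_mult[OF m] chr_smul[OF m] algebra_simps)
  moreover have "\<nu> w = 0"
    unfolding w_def by (simp add: chr_diff[OF n] chr_mult[OF n] chr_smul[OF n] algebra_simps)
  moreover have "\<mu> y * (\<mu> x - \<nu> x) \<noteq> 0" using x y by simp
  ultimately show ?thesis by metis
qed

lemma idem_exists:
  assumes K: "finite K" "\<forall>\<nu>\<in>K. character smul \<nu>" and m: "character smul \<mu>" "\<mu> \<notin> K"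
  shows "\<exists>e. \<mu> e = 1 \<and> (\<forall>\<nu>\<in>K. \<nu> e = 0)"
proof -
  have "\<exists>p. \<mu> p \<noteq> 0 \<and> (\<forall>\<nu>\<in>K. \<nu> p = 0)"
    using K m
  proof (induction K rule: finite_induct)
    case empty then show ?case using chr_nz[OF m(1)] by auto
  next
    case (insert \<nu> K)
    then obtain p where p: "\<mu> p \<noteq> 0" "\<forall>\<nu>\<in>K. \<nu> p = 0" by auto
    have "\<mu> \<noteq> \<nu>" using insert by auto
    moreover have cn: "character smul \<nu>" using insert.prems by auto
    ultimately obtain w where w: "\<mu> w \<noteq> 0" "\<nu> w = 0" using sep_elem[OF m(1) cn] by auto
    have "\<mu> (p * w) \<noteq> 0" using p w chr_mult[OF m(1)] by simp
    moreover have "\<forall>\<nu>'\<in>insert \<nu> K. \<nu>' (p * w) = 0"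
      using p w insert.prems by (auto simp: chr_mult)
    ultimately show ?case by blast
  qed
  then obtain p where p: "\<mu> p \<noteq> 0" "\<forall>\<nu>\<in>K. \<nu> p = 0" by auto
  show ?thesis
    by (rule exI[of _ "smul (1 / \<mu> p) p"]) (use p K m in \<open>auto simp: chr_smul\<close>)
qed

lemma unit_on_chars:
  assumes K: "finite K" "\<forall>\<nu>\<in>K. character smul \<nu>"
  shows "\<exists>u. \<forall>\<nu>\<in>K. \<nu> u = 1"
  using K
proof (induction K rule: finite_induct)
  case empty then show ?case by auto
next
  case (insert \<mu> K)
  then obtain u where u: "\<forall>\<nu>\<in>K. \<nu> u = 1" by auto
  obtain e where e: "\<mu> e = 1" "\<forall>\<nu>\<in>K. \<nu> e = 0"
    using idem_exists[of K \<mu>] insert by auto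
  have m: "character smul \<mu>" using insert by auto
  have "\<forall>\<nu>\<in>insert \<mu> K. \<nu> (u + e - u * e) = 1"
  proof
    fix \<nu> assume "\<nu> \<in> insert \<mu> K"
    then have c: "character smul \<nu>" using insert by auto
    have "\<nu> (u + e - u * e) = \<nu> u + \<nu> e - \<nu> u * \<nu> e"
      by (simp add: chr_diff[OF c] chr_add[OF c] chr_mult[OF c])
    then show "\<nu> (u + e - u * e) = 1" using \<open>\<nu> \<in> insert \<mu> K\<close> u e by auto
  qed
  then show ?case by blast
qed

lemma card_chars_bound:
  assumes B: "finite B" "V.span B = UNIV"
    and K: "finite K" "\<forall>\<nu>\<in>K. character smul \<nu>"
  shows "card K \<le> card B"
proof -
  have "\<forall>\<mu>\<in>K. \<exists>e. \<mu> e = 1 \<and> (\<forall>\<nu>\<in>K - {\<mu>}. \<nu> e = 0)"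
    using idem_exists[of "K - _"] K by auto
  then obtain e where e: "\<And>\<mu>. \<mu> \<in> K \<Longrightarrow> \<mu> (e \<mu>) = 1 \<and> (\<forall>\<nu>\<in>K - {\<mu>}. \<nu> (e \<mu>) = 0)"
    by metis
  have inj: "inj_on e K"
  proof (rule inj_onI)
    fix \<mu> \<nu> assume "\<mu> \<in> K" "\<nu> \<in> K" "e \<mu> = e \<nu>"
    then show "\<mu> = \<nu>" using e[of \<mu>] e[of \<nu>] by (metis DiffI empty_iff insert_iff zero_neq_one)
  qed
  have ind: "V.independent (e ` K)"
    unfolding V.dependent_def
  proof
    assume "\<exists>a\<in>e ` K. a \<in> V.span (e ` K - {a})"
    then obtain \<mu> where mu: "\<mu> \<in> K" "e \<mu> \<in> V.span (e ` K - {e \<mu>})" by auto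
    have c: "character smul \<mu>" using K mu by auto
    have "\<mu> (e \<mu>) = 0"
    proof (rule chr_span[OF c _ mu(2)])
      fix t assume "t \<in> e ` K - {e \<mu>}"
      then obtain \<nu> where "\<nu> \<in> K" "t = e \<nu>" "\<nu> \<noteq> \<mu>" by auto
      then show "\<mu> t = 0" using e[of \<nu>] mu by auto
    qed
    then show False using e[OF mu(1)] by simp
  qed
  have "card (e ` K) \<le> card B"
    using V.independent_span_bound[OF B(1) ind] B(2) by auto
  then show ?thesis using card_image[OF inj] by simp
qed

lemma finite_chars:
  assumes B: "finite B" "V.span B = UNIV"
  shows "finite {\<mu>. character smul \<mu>}"
proof (rule ccontr)
  assume "infinite {\<mu>. character smul \<mu>}"
  then obtain K where K: "finite K" "card K = Suc (card B)" "K \<subseteq> {\<mu>. character smul \<mu>}"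
    using infinite_arbitrarily_large by blast
  then show False using card_chars_bound[OF B K(1)] by auto
qed

end

context aut
begin

lemma comm_zero: "(\<lambda>n. 0) \<in> commutant \<sigma>"
  unfolding commutant_iff cp_carrier_def by simp

lemma comm_add:
  assumes "f \<in> commutant \<sigma>" "g \<in> commutant \<sigma>"
  shows "(\<lambda>n. f n + g n) \<in> commutant \<sigma>"
proof -
  have F: "finite {n. f n \<noteq> 0}" and G: "finite {n. g n \<noteq> 0}"
    and fc: "\<And>n a. f n * P n a = a * f n" and gc: "\<And>n a. g n * P n a = a * g n"
    using assms unfolding commutant_iff cp_carrier_def by auto
  have "finite ({n. f n \<noteq> 0} \<union> {n. g n \<noteq> 0})" using F G by simp
  then have "finite {n. f n + g n \<noteq> 0}" by (rule finite_subset[rotated]) auto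
  moreover have "(f n + g n) * P n a = a * (f n + g n)" for n a
    by (simp add: distrib_left distrib_right fc gc)
  ultimately show ?thesis unfolding commutant_iff cp_carrier_def by auto
qed

lemma comm_smul:
  assumes "f \<in> commutant \<sigma>"
  shows "(\<lambda>n. smul c (f n)) \<in> commutant \<sigma>"
proof -
  have F: "finite {n. f n \<noteq> 0}" and fc: "\<And>n a. f n * P n a = a * f n"
    using assms unfolding commutant_iff cp_carrier_def by auto
  have "finite {n. smul c (f n) \<noteq> 0}" using F by (rule finite_subset[rotated]) auto
  moreover have "smul c (f n) * P n a = a * smul c (f n)" for n a
    by (simp add: smul_prod[symmetric] smul_prod2 fc)
  ultimately show ?thesis unfolding commutant_iff cp_carrier_def by auto
qed

lemma comm_mult:
  assumes f: "f \<in> commutant \<sigma>" and g: "g \<in> commutant \<sigma>"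
  shows "cp_mult \<sigma> f g \<in> commutant \<sigma>"
proof -
  have F: "finite {n. f n \<noteq> 0}" and G: "finite {n. g n \<noteq> 0}"
    and fc: "\<And>n a. f n * P n a = a * f n" and gc: "\<And>n a. g n * P n a = a * g n"
    using f g unfolding commutant_iff cp_carrier_def by auto
  have sub: "{k. cp_mult \<sigma> f g k \<noteq> 0} \<subseteq> (\<lambda>p. fst p + snd p) ` ({n. f n \<noteq> 0} \<times> {n. g n \<noteq> 0})"
  proof
    fix k assume "k \<in> {k. cp_mult \<sigma> f g k \<noteq> 0}"
    then have "(\<Sum>n\<in>{n. f n \<noteq> 0}. f n * P n (g (k - n))) \<noteq> 0" unfolding cp_mult_def by simp
    then obtain n where n: "n \<in> {n. f n \<noteq> 0}" "f n * P n (g (k - n)) \<noteq> 0"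
      using sum.not_neutral_contains_not_neutral by blast
    then have "g (k - n) \<noteq> 0" using P_zero by force
    then have "(n, k - n) \<in> {n. f n \<noteq> 0} \<times> {n. g n \<noteq> 0}" using n by simp
    then show "k \<in> (\<lambda>p. fst p + snd p) ` ({n. f n \<noteq> 0} \<times> {n. g n \<noteq> 0})"
      by (metis (no_types, lifting) add_diff_cancel_left' diff_add_cancel fst_conv image_eqI snd_conv)
  qed
  have car: "cp_mult \<sigma> f g \<in> cp_carrier"
    unfolding cp_carrier_def using finite_subset[OF sub] F G by auto
  have "cp_mult \<sigma> f g k * P k a = a * cp_mult \<sigma> f g k" for k a
  proof -
    have trm: "f n * P n (g (k - n)) * P k a = a * (f n * P n (g (k - n)))" for n
    proof -
      have "P k a = P n (P (k - n) a)" using P_add[of n "k - n" a] by simp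
      then have "f n * P n (g (k - n)) * P k a = f n * P n (g (k - n) * P (k - n) a)"
        by (simp add: ahom_mult[OF ahom_P] mult.assoc)
      also have "\<dots> = f n * P n (a * g (k - n))" by (simp add: gc)
      also have "\<dots> = (f n * P n a) * P n (g (k - n))" by (simp add: ahom_mult[OF ahom_P] mult.assoc)
      also have "\<dots> = a * (f n * P n (g (k - n)))" by (simp add: fc mult.assoc)
      finally show ?thesis .
    qed
    show ?thesis unfolding cp_mult_def sum_distrib_right sum_distrib_left trm ..
  qed
  then show ?thesis using car unfolding commutant_iff by auto
qed

lemma gen_sum:
  assumes "finite F" "\<And>i. i \<in> F \<Longrightarrow> h i \<in> gen_subalg smul \<sigma> S"
  shows "(\<lambda>k. \<Sum>i\<in>F. h i k) \<in> gen_subalg smul \<sigma> S"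
  using assms
proof (induction F rule: finite_induct)
  case empty then show ?case by (simp add: gen_zero)
next
  case (insert x F)
  then show ?case by (simp add: gen_add)
qed

lemma comm_decomp:
  assumes "f \<in> cp_carrier"
  shows "f = (\<lambda>k. \<Sum>n\<in>{n. f n \<noteq> 0}. mon n (f n) k)"
proof
  fix k
  have fin: "finite {n. f n \<noteq> 0}" using assms by (simp add: cp_carrier_def)
  have "(\<Sum>n\<in>{n. f n \<noteq> 0}. mon n (f n) k) = (\<Sum>n\<in>{n. f n \<noteq> 0}. if n = k then f k else 0)"
    by (rule sum.cong) (auto simp: mon_def)
  also have "\<dots> = f k" using fin by simp
  finally show "f k = (\<Sum>n\<in>{n. f n \<noteq> 0}. mon n (f n) k)" by simp
qed

end

locale ss = aut +
  assumes semi: "semisimple smul" and fd: "finite_dim_complex smul"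
begin

lemma fdB: obtains B where "finite B" "V.span B = UNIV"
proof -
  obtain B where B: "finite B" "\<forall>x. \<exists>c. x = (\<Sum>b\<in>B. smul (c b) b)"
    using fd unfolding finite_dim_complex_def by blast
  have "x \<in> V.span B" for x
  proof -
    obtain c where "x = (\<Sum>b\<in>B. smul (c b) b)" using B by blast
    then show ?thesis by (simp add: V.span_sum V.span_scale V.span_base)
  qed
  then show ?thesis using that B by blast
qed

lemma semi_eq: "(\<And>\<mu>. character smul \<mu> \<Longrightarrow> \<mu> a = \<mu> b) \<Longrightarrow> a = b"
  using semi unfolding semisimple_def by blast

lemma finite_X: "finite {\<mu>. character smul \<mu>}"
  using fdB finite_chars by metis

lemma unit_ex: "\<exists>u::'a. \<forall>a. u * a = a"
proof -
  obtain u where u: "\<forall>\<nu>\<in>{\<mu>. character smul \<mu>}. \<nu> u = 1"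
    using unit_on_chars[OF finite_X] by auto
  have "u * a = a" for a
    by (rule semi_eq) (use u in \<open>simp add: chr_mult\<close>)
  then show ?thesis by blast
qed

lemma chr_P: assumes c: "character smul \<mu>" shows "character smul (\<lambda>x. \<mu> (P n x))"
proof -
  obtain x where x: "\<mu> x \<noteq> 0" using chr_nz[OF c] by auto
  have "\<mu> (P n (P (-n) x)) \<noteq> 0" using x P_inv(2)[of n x] by simp
  then show ?thesis unfolding character_def
    using c by (auto simp: ahom_add[OF ahom_P] ahom_smul[OF ahom_P] ahom_mult[OF ahom_P] chr_add chr_smul chr_mult)
qed

lemma period: "\<exists>N>0. \<forall>x. P N x = x"
proof -
  define X where "X = {\<mu>. character smul \<mu>}"
  define \<Phi> where "\<Phi> i = (\<lambda>\<mu>\<in>X. (\<lambda>x. \<mu> (P (int i) x)))" for i :: nat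
  have "range \<Phi> \<subseteq> PiE X (\<lambda>_. X)"
    unfolding \<Phi>_def X_def by (auto simp: chr_P)
  moreover have "finite (PiE X (\<lambda>_. X))" using finite_X unfolding X_def by (simp add: finite_PiE)
  ultimately have "finite (range \<Phi>)" by (rule finite_subset)
  then have "\<not> inj \<Phi>" using range_inj_infinite by blast
  then obtain i j where ij: "i \<noteq> j" "\<Phi> i = \<Phi> j" unfolding inj_def by blast
  then obtain i j where ij: "i < j" "\<Phi> i = \<Phi> j"
    by (metis linorder_neq_iff)
  define N where "N = int j - int i"
  have N: "N > 0" using ij by (simp add: N_def)
  have "P N x = x" for x
  proof (rule semi_eq)
    fix \<mu> assume c: "character smul \<mu>"
    then have "\<mu> \<in> X" by (simp add: X_def)
    then have eq: "(\<lambda>x. \<mu> (P (int i) x)) = (\<lambda>x. \<mu> (P (int j) x))"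
      using fun_cong[OF ij(2), of \<mu>] unfolding \<Phi>_def by simp
    define z where "z = P (- int i) x"
    have xz: "x = P (int i) z" unfolding z_def using P_inv(2) by simp
    have "P N x = P (int j) z" unfolding xz N_def using P_add[of "int j - int i" "int i" z] by simp
    then show "\<mu> (P N x) = \<mu> x" using fun_cong[OF eq, of z] xz by simp
  qed
  then show ?thesis using N by blast
qed

end

locale ss2 = ss +
  fixes N :: int and u :: 'a
  assumes N: "N > 0" "\<And>x. P N x = x" and u: "\<And>a. u * a = a"
begin

lemma u2: "a * u = a" using u by (simp add: mult.commute)

lemma Pu: "P n u = u"
proof -
  have *: "P n u * b = b" for b
  proof -
    have "P n u * P n (P (-n) b) = P n (u * P (-n) b)" by (simp add: ahom_mult[OF ahom_P])
    then show ?thesis using u P_inv(2)[of n b] by simp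
  qed
  have "P n u = P n u * u" by (simp add: u2)
  also have "\<dots> = u" by (rule *)
  finally show ?thesis .
qed

lemma PNneg: "P (-N) x = x"
  using P_inv(1)[of N x] N(2) by simp

lemma PqN: "P (q * N) x = x"
proof (induction q arbitrary: x rule: int_induct[where k=0])
  case base then show ?case by (simp add: P_0)
next
  case (step1 i)
  have "P ((i + 1) * N) x = P (i * N) (P N x)" using P_add[of "i*N" N x] by (simp add: algebra_simps)
  then show ?case using step1 N(2) by simp
next
  case (step2 i)
  have "P ((i - 1) * N) x = P (i * N) (P (-N) x)" using P_add[of "i*N" "-N" x] by (simp add: algebra_simps)
  then show ?case using step2 PNneg by simp
qed

lemma Pmod: "P n x = P (n mod N) x"
proof -
  have "P n x = P (n div N * N + n mod N) x" by simp
  also have "\<dots> = P (n div N * N) (P (n mod N) x)" by (rule P_add)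
  also have "\<dots> = P (n mod N) x" by (rule PqN)
  finally show ?thesis .
qed

definition Cs :: "int \<Rightarrow> 'a set" where "Cs r = {c. \<forall>a. c * P r a = a * c}"

lemma Cs_mod: "Cs n = Cs (n mod N)"
  unfolding Cs_def using Pmod by auto

lemma Cs_subspace: "V.subspace (Cs r)"
  unfolding Cs_def
  by (rule V.subspaceI) (auto simp: distrib_left distrib_right smul_prod[symmetric] smul_prod2)

lemma Cs_basis: "\<exists>Br. finite Br \<and> Br \<subseteq> Cs r \<and> Cs r \<subseteq> V.span Br"
proof -
  obtain B where B: "finite B" "V.span B = UNIV" by (rule fdB)
  obtain Bb where Bb: "Bb \<subseteq> Cs r" "V.independent Bb" "Cs r \<subseteq> V.span Bb" "card Bb = V.dim (Cs r)"
    by (rule V.basis_exists)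
  have "finite Bb" using V.independent_span_bound[OF B(1) Bb(2)] B(2) by auto
  then show ?thesis using Bb by blast
qed

lemma mon_comm: "c \<in> Cs r \<Longrightarrow> mon r c \<in> commutant \<sigma>"
proof -
  assume c: "c \<in> Cs r"
  have "{n. mon r c n \<noteq> 0} \<subseteq> {r}" by (auto simp: mon_def)
  then have "mon r c \<in> cp_carrier" unfolding cp_carrier_def by (auto intro: finite_subset)
  then show ?thesis unfolding commutant_iff using c by (auto simp: mon_def Cs_def)
qed

lemma u_Cs: "u \<in> Cs N" "u \<in> Cs (-N)"
  unfolding Cs_def by (auto simp: u u2 N(2) PNneg)

theorem fg: "finitely_generated_algebra smul \<sigma> (commutant \<sigma>)"
proof -
  obtain Br where Br: "\<And>r. finite (Br r) \<and> Br r \<subseteq> Cs r \<and> Cs r \<subseteq> V.span (Br r)"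
    using Cs_basis by metis
  define S where "S = (\<Union>r\<in>{0..<N}. mon r ` Br r) \<union> {mon N u, mon (-N) u}"
  have finS: "finite S" unfolding S_def using Br by auto
  have Ssub: "S \<subseteq> commutant \<sigma>"
    unfolding S_def using Br mon_comm u_Cs by blast
  have gsub: "gen_subalg smul \<sigma> S \<subseteq> commutant \<sigma>"
  proof
    fix f assume "f \<in> gen_subalg smul \<sigma> S"
    then show "f \<in> commutant \<sigma>"
      by (induction rule: gen_subalg.induct)
         (use Ssub in \<open>auto intro: comm_zero comm_add comm_smul comm_mult\<close>)
  qed
  have inS: "mon N u \<in> gen_subalg smul \<sigma> S" "mon (-N) u \<in> gen_subalg smul \<sigma> S"
    unfolding S_def by (auto intro: gen_base)
  have qN: "mon (q * N) u \<in> gen_subalg smul \<sigma> S" for q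
  proof (induction q rule: int_induct[where k=0])
    case base
    have "cp_mult \<sigma> (mon N u) (mon (-N) u) = mon 0 u" by (simp add: cp_mult_mon Pu u)
    then show ?case using gen_mult[OF inS] by simp
  next
    case (step1 i)
    have "cp_mult \<sigma> (mon (i * N) u) (mon N u) = mon ((i + 1) * N) u"
      by (simp add: cp_mult_mon Pu u algebra_simps)
    then show ?case using gen_mult[OF step1(2) inS(1)] by simp
  next
    case (step2 i)
    have "cp_mult \<sigma> (mon (i * N) u) (mon (-N) u) = mon ((i - 1) * N) u"
      by (simp add: cp_mult_mon Pu u algebra_simps)
    then show ?case using gen_mult[OF step2(2) inS(2)] by simp
  qed
  have mon_gen: "mon n c \<in> gen_subalg smul \<sigma> S" if c: "c \<in> Cs n" for n c
  proof -
    define r where "r = n mod N"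
    have r: "r \<in> {0..<N}" unfolding r_def using N(1) by simp
    have cr: "c \<in> Cs r" using c Cs_mod r_def by simp
    then have "c \<in> V.span (Br r)" using Br by blast
    then obtain w where w: "c = (\<Sum>b\<in>Br r. smul (w b) b)"
      unfolding V.span_finite[OF conjunct1[OF Br]] by blast
    have "mon r c = (\<lambda>k. \<Sum>b\<in>Br r. smul (w b) (mon r b k))"
      unfolding w mon_def by auto
    moreover have "(\<lambda>k. \<Sum>b\<in>Br r. smul (w b) (mon r b k)) \<in> gen_subalg smul \<sigma> S"
    proof (rule gen_sum)
      show "finite (Br r)" using Br by blast
      fix b assume "b \<in> Br r"
      then have "mon r b \<in> S" unfolding S_def using r by blast
      then have "mon r b \<in> gen_subalg smul \<sigma> S" by (rule gen_base)
      then show "(\<lambda>k. smul (w b) (mon r b k)) \<in> gen_subalg smul \<sigma> S" by (rule gen_smul)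
    qed
    ultimately have mr: "mon r c \<in> gen_subalg smul \<sigma> S" by simp
    have "cp_mult \<sigma> (mon r c) (mon (n div N * N) u) = mon n c"
      by (simp add: cp_mult_mon Pu u2 r_def)
    then show ?thesis using gen_mult[OF mr qN[of "n div N"]] by simp
  qed
  have csub: "commutant \<sigma> \<subseteq> gen_subalg smul \<sigma> S"
  proof
    fix f assume f: "f \<in> commutant \<sigma>"
    then have car: "f \<in> cp_carrier" and fc: "\<And>n a. f n * P n a = a * f n"
      unfolding commutant_iff by auto
    have "(\<lambda>k. \<Sum>n\<in>{n. f n \<noteq> 0}. mon n (f n) k) \<in> gen_subalg smul \<sigma> S"
    proof (rule gen_sum)
      show "finite {n. f n \<noteq> 0}" using car by (simp add: cp_carrier_def)
      fix n show "mon n (f n) \<in> gen_subalg smul \<sigma> S" by (rule mon_gen) (simp add: Cs_def fc)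
    qed
    then show "f \<in> gen_subalg smul \<sigma> S" using comm_decomp[OF car] by simp
  qed
  show ?thesis unfolding finitely_generated_algebra_def
    using finS Ssub gsub csub by blast
qed

end

lemma (in ss) dir2: "finitely_generated_algebra smul \<sigma> (commutant \<sigma>)"
proof -
  obtain N where N: "N > 0" "\<And>x. P N x = x" using period by blast
  obtain u :: 'a where u: "\<And>a. u * a = a" using unit_ex by blast
  interpret ss2 smul \<sigma> N u by unfold_locales (use N u in auto)
  show ?thesis by (rule fg)
qed

theorem theorem4p18:
  fixes smul :: "complex \<Rightarrow> 'a::{real_normed_algebra,comm_ring,banach} \<Rightarrow> 'a"
    and \<sigma> :: "'a \<Rightarrow> 'a"
  assumes "complex_scalar smul"
    and "semisimple smul"
    and "algebra_automorphism smul \<sigma>"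
  shows "finitely_generated_algebra smul \<sigma> (commutant \<sigma>) \<longleftrightarrow> finite_dim_complex smul"
proof -
  interpret aut smul \<sigma>
    by (intro aut.intro csa.intro aut_axioms.intro assms(1) assms(3))
  show ?thesis
  proof
    assume "finitely_generated_algebra smul \<sigma> (commutant \<sigma>)"
    then obtain S where "finite S" "gen_subalg smul \<sigma> S = commutant \<sigma>"
      unfolding finitely_generated_algebra_def by blast
    then show "finite_dim_complex smul" by (rule dir1)
  next
    assume fd: "finite_dim_complex smul"
    interpret ss smul \<sigma>
      by (intro ss.intro ss_axioms.intro aut_axioms assms(2) fd)
    show "finitely_generated_algebra smul \<sigma> (commutant \<sigma>)" by (rule dir2)
  qed
qed

end
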